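(* Assume (A), $c_1\ge c_1^F$, that $v$ is differentiable on $[0,\infty)$ (one-sided at $0$) with $v'(0)=0$, and let $t^*:=t^F_{c_2}$. Define the input-rate path (the derivative on $(-t^*,0)$ of the most probable path $f^*(r)=-\frac{\Gamma(-r,t^* )}{v(t^* )}(b+c_2t^* )$) $$g^*(r):=\frac{b+c_2t^*}{2v(t^* )}\big(v'(r+t^* )+v'(-r)\big),\qquad r\in[-t^*,0].$$ Then $g^*(0)=g^*(-t^* )=c_2$.
   Context: $v:[0,\infty)\to[0,\infty)$ is continuous, $v(0)=0$, $\lim_{t\to\infty}v(t)/t^\alpha=0$ for some $\alpha<2$, the variance function of a centered Gaussian process with stationary increments; $\Gamma(s,t):=\tfrac12(v(|s|)+v(|t|)-v(|t-s|))$. Fix $b>0$, $c_1>c_2>0$. $L_c(t):=(b+ct)^2/(2v(t))$; $t^F_{c_2}$ is a minimizer of $L_{c_2}$ over $t>0$; $k(s,t):=\frac{\Gamma(s,t)}{v(t)}(b+c_2t)$; $c_1^F:=\sup_{s\in(0,t^F_{c_2})}k(s,t^F_{c_2})/s$. Assumption (A): $\sqrt v\in C^2([0,\infty))$, strictly increasing and strictly concave. *)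

theory Defs
  imports "HOL-Analysis.Analysis"
begin

text \<open>Covariance function of a centered Gaussian process with stationary increments
  and variance function v: Gamma(s,t) = (v|s| + v|t| - v|t-s|)/2.\<close>
definition Gamma :: "(real \<Rightarrow> real) \<Rightarrow> real \<Rightarrow> real \<Rightarrow> real" where
  "Gamma v s t = (v \<bar>s\<bar> + v \<bar>t\<bar> - v \<bar>t - s\<bar>) / 2"

text \<open>v is the variance function of a centered Gaussian process with stationary
  increments (and X(0)=0): equivalently, the induced covariance Gamma is a positive
  semidefinite kernel (Kolmogorov extension), and v is continuous with v 0 = 0.\<close>
definition is_variance_function :: "(real \<Rightarrow> real) \<Rightarrow> bool" where
  "is_variance_function v \<longleftrightarrow>
     (\<forall>(n::nat) (x::nat \<Rightarrow> real) (a::nat \<Rightarrow> real).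
        0 \<le> (\<Sum>i<n. \<Sum>j<n. a i * a j * Gamma v (x i) (x j)))"

definition L :: "(real \<Rightarrow> real) \<Rightarrow> real \<Rightarrow> real \<Rightarrow> real \<Rightarrow> real" where
  "L v b c t = (b + c * t)\<^sup>2 / (2 * v t)"

definition kfun :: "(real \<Rightarrow> real) \<Rightarrow> real \<Rightarrow> real \<Rightarrow> real \<Rightarrow> real \<Rightarrow> real" where
  "kfun v b c2 s t = Gamma v s t / v t * (b + c2 * t)"

definition c1F :: "(real \<Rightarrow> real) \<Rightarrow> real \<Rightarrow> real \<Rightarrow> real \<Rightarrow> ereal" where
  "c1F v b c2 t = (SUP s\<in>{0<..<t}. ereal (kfun v b c2 s t / s))"

definition strictly_concave_on :: "real set \<Rightarrow> (real \<Rightarrow> real) \<Rightarrow> bool" where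
  "strictly_concave_on S f \<longleftrightarrow>
     (\<forall>x\<in>S. \<forall>y\<in>S. \<forall>u::real. x \<noteq> y \<and> 0 < u \<and> u < 1 \<longrightarrow>
        u * f x + (1 - u) * f y < f (u * x + (1 - u) * y))"

definition assumption_A :: "(real \<Rightarrow> real) \<Rightarrow> bool" where
  "assumption_A v \<longleftrightarrow>
     (\<exists>d1 d2. (\<forall>t\<ge>0. ((\<lambda>x. sqrt (v x)) has_real_derivative d1 t) (at t within {0..})
                    \<and> (d1 has_real_derivative d2 t) (at t within {0..}))
            \<and> continuous_on {0..} d2)
     \<and> strict_mono_on {0..} (\<lambda>x. sqrt (v x))
     \<and> strictly_concave_on {0..} (\<lambda>x. sqrt (v x))"

definition gstar :: "(real \<Rightarrow> real) \<Rightarrow> (real \<Rightarrow> real) \<Rightarrow> real \<Rightarrow> real \<Rightarrow> real \<Rightarrow> real \<Rightarrow> real" where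
  "gstar v v' b c2 t r = (b + c2 * t) / (2 * v t) * (v' (r + t) + v' (- r))"

end

theory Submission
  imports Defs
begin

theorem proposition3p13:
  fixes v v' :: "real \<Rightarrow> real" and b c1 c2 tstar :: real
  assumes v_nonneg: "\<forall>t\<ge>0. 0 \<le> v t"
    and v_cont: "continuous_on {0..} v"
    and v0: "v 0 = 0"
    and v_growth: "\<exists>\<alpha><2. ((\<lambda>t. v t / t powr \<alpha>) \<longlongrightarrow> 0) at_top"
    and v_var: "is_variance_function v"
    and b_pos: "b > 0" and c2_pos: "c2 > 0" and c12: "c1 > c2"
    and tstar_pos: "tstar > 0"
    and tstar_min: "\<forall>t>0. L v b c2 tstar \<le> L v b c2 t"
    and A: "assumption_A v"
    and c1_ge: "ereal c1 \<ge> c1F v b c2 tstar"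
    and v_deriv: "\<forall>t\<ge>0. (v has_real_derivative v' t) (at t within {0..})"
    and v'0: "v' 0 = 0"
  shows "gstar v v' b c2 tstar 0 = c2 \<and> gstar v v' b c2 tstar (- tstar) = c2"
proof -
  have sm: "strict_mono_on {0..} (\<lambda>x. sqrt (v x))" using A unfolding assumption_A_def by blast
  have "sqrt (v 0) < sqrt (v tstar)" using sm tstar_pos by (auto simp: strict_mono_on_def)
  hence vpos: "v tstar > 0" using v0 by (metis real_sqrt_gt_0_iff real_sqrt_zero)
  have "interior {0::real..} = {0<..}" by simp
  hence "at tstar within {0..} = at tstar" using tstar_pos by (metis at_within_interior greaterThan_iff)
  moreover have "(v has_real_derivative v' tstar) (at tstar within {0..})" using v_deriv tstar_pos by simp
  ultimately have dv: "(v has_real_derivative v' tstar) (at tstar)" by simp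
  define B where "B = b + c2 * tstar"
  have dL: "((\<lambda>t. L v b c2 t) has_real_derivative
      ((2 * B * c2) * (2 * v tstar) - B\<^sup>2 * (2 * v' tstar)) / (2 * v tstar)\<^sup>2) (at tstar)"
  proof -
    have "((\<lambda>t. (b + c2 * t)\<^sup>2) has_real_derivative 2 * B * c2) (at tstar)"
      unfolding B_def by (auto intro!: derivative_eq_intros)
    moreover have "((\<lambda>t. 2 * v t) has_real_derivative 2 * v' tstar) (at tstar)"
      using DERIV_cmult[OF dv, of 2] by simp
    ultimately have "((\<lambda>t. (b + c2 * t)\<^sup>2 / (2 * v t)) has_real_derivative
      ((2 * B * c2) * (2 * v tstar) - B\<^sup>2 * (2 * v' tstar)) / (2 * v tstar)\<^sup>2) (at tstar)"
      using DERIV_divide[of "\<lambda>t. (b + c2 * t)\<^sup>2" _ tstar UNIV "\<lambda>t. 2 * v t"] vpos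
      by (simp add: B_def power2_eq_square)
    thus ?thesis by (simp add: L_def[abs_def])
  qed
  have "((2 * B * c2) * (2 * v tstar) - B\<^sup>2 * (2 * v' tstar)) / (2 * v tstar)\<^sup>2 = 0"
    apply (rule DERIV_local_min[OF dL, of tstar])
    using tstar_pos tstar_min by auto
  hence "(2 * B * c2) * (2 * v tstar) = B\<^sup>2 * (2 * v' tstar)" using vpos by simp
  moreover have "B > 0" unfolding B_def using b_pos c2_pos tstar_pos by (simp add: add_pos_pos)
  ultimately have "B * v' tstar / (2 * v tstar) = c2" using vpos
    by (simp add: field_simps power2_eq_square)
  thus ?thesis unfolding gstar_def B_def using v'0 by (simp add: field_simps)
qed

end
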